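(* Let $\mathcal{X}=\mathbb{V}^p$ for some $p\in\{0,1,\infty\}$ and let $\varphi$ be a dynamic LM-measure on $\mathcal{X}$. The following are equivalent: (1) $\varphi$ is semi-weakly acceptance time consistent, i.e. for all $V\in\mathcal{X}$, $t\in\mathbb{T}$ with $t<T$, and $m_{t+1}\in\bar L^0_{t+1}$: $\varphi_{t+1}(V)\ge m_{t+1}\Rightarrow\varphi_t(V)\ge 1_{\{V_t\ge0\}}\operatorname{Essinf}_t(m_{t+1})+1_{\{V_t<0\}}(-\infty)$; (2) for all $V\in\mathcal{X}$ and $t<T$: $\varphi_t(V)\ge 1_{\{V_t\ge0\}}\operatorname{Essinf}_t(\varphi_{t+1}(V))+1_{\{V_t<0\}}(-\infty)$; (3) for all $V\in\mathcal{X}$, $t<T$ and $m_t\in\bar L^0_t$: if $V_t\ge0$ and $\varphi_{t+1}(V)\ge m_t$, then $\varphi_t(V)\ge m_t$. Analogously, the following are equivalent: (1') $\varphi$ is semi-weakly rejection time consistent, i.e. $\varphi_{t+1}(V)\le m_{t+1}\Rightarrow\varphi_t(V)\le 1_{\{V_t\le0\}}\operatorname{Esssup}_t(m_{t+1})+1_{\{V_t>0\}}(+\infty)$ for all $V$, $t<T$, $m_{t+1}\in\bar L^0_{t+1}$; (2') $\varphi_t(V)\le 1_{\{V_t\le0\}}\operatorname{Esssup}_t(\varphi_{t+1}(V))+1_{\{V_t>0\}}(+\infty)$ for all $V$, $t<T$; (3') for all $V$, $t<T$, $m_t\in\bar L^0_t$: if $V_t\le0$ and $\varphi_{t+1}(V)\le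 m_t$ then $\varphi_t(V)\le m_t$.
   Context: Let $(\Omega,\mathcal{F},\{\mathcal{F}_t\}_{t\in\mathbb{T}},P)$ be a filtered probability space, $\mathbb{T}=\{0,\dots,T\}$, $\mathcal{F}_0$ trivial. $\bar L^0_t$ denotes $\mathcal{F}_t$-measurable random variables with values in $[-\infty,\infty]$; $L^p_t=L^p(\Omega,\mathcal{F}_t,P)$; $\mathbb{V}^p=\{(V_t)_{t\in\mathbb{T}}:V_t\in L^p_t\}$ ordered pointwise a.s. For $m\in L^\infty_t$, $m\cdot_tV:=(V_0,\dots,V_{t-1},mV_t,mV_{t+1},\dots)$. Conventions: $\infty-\infty=-\infty$, $0\cdot\pm\infty=0$. A dynamic LM-measure is a family $\{\varphi_t\}_{t\in\mathbb{T}}$ of maps $\varphi_t:\mathbb{V}^p\to\bar L^0_t$ with $1_A\varphi_t(V)=1_A\varphi_t(1_A\cdot_tV)$ for all $A\in\mathcal{F}_t$ and $V\le W\Rightarrow\varphi_t(V)\le\varphi_t(W)$. For bounded $X$, $\operatorname{Essinf}_tX$ is the largest $\mathcal{F}_t$-measurable random variable a.s. dominated by $X$, $\operatorname{Esssup}_tX=-\operatorname{Essinf}_t(-X)$; for $[-\infty,\infty]$-valued $X$, $\operatorname{Essinf}_tX:=\lim_n\operatorname{Essinf}_t(X^+\wedge n)-\lim_n\operatorname{Esssup}_t(X^-\wedge n)$ and $\operatorname{Esssup}_tX:=-\operatorname{Essinf}_t(-X)$. *)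

theory Defs
  imports "HOL-Probability.Probability"
begin

definition filtration :: "'a measure \<Rightarrow> (nat \<Rightarrow> 'a measure) \<Rightarrow> nat \<Rightarrow> bool" where
  "filtration M F T \<longleftrightarrow>
     (\<forall>t\<le>T. subalgebra M (F t)) \<and>
     (\<forall>s t. s \<le> t \<longrightarrow> t \<le> T \<longrightarrow> sets (F s) \<subseteq> sets (F t)) \<and>
     sets (F 0) = {{}, space M}"

definition in_Lp :: "'a measure \<Rightarrow> 'a measure \<Rightarrow> ennreal \<Rightarrow> ('a \<Rightarrow> real) \<Rightarrow> bool" where
  "in_Lp M G p f \<longleftrightarrow> f \<in> borel_measurable G \<and>
     (if p = 0 then True
      else if p = 1 then integrable M f
      else (\<exists>C. AE \<omega> in M. \<bar>f \<omega>\<bar> \<le> C))"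

definition Vp :: "'a measure \<Rightarrow> (nat \<Rightarrow> 'a measure) \<Rightarrow> nat \<Rightarrow> ennreal \<Rightarrow> (nat \<Rightarrow> 'a \<Rightarrow> real) set" where
  "Vp M F T p = {V. \<forall>t\<le>T. in_Lp M (F t) p (V t)}"

definition proc_le :: "'a measure \<Rightarrow> nat \<Rightarrow> (nat \<Rightarrow> 'a \<Rightarrow> real) \<Rightarrow> (nat \<Rightarrow> 'a \<Rightarrow> real) \<Rightarrow> bool" where
  "proc_le M T V W \<longleftrightarrow> (\<forall>t\<le>T. AE \<omega> in M. V t \<omega> \<le> W t \<omega>)"

definition dot_t :: "('a \<Rightarrow> real) \<Rightarrow> nat \<Rightarrow> (nat \<Rightarrow> 'a \<Rightarrow> real) \<Rightarrow> (nat \<Rightarrow> 'a \<Rightarrow> real)" where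
  "dot_t m t V = (\<lambda>s \<omega>. if s < t then V s \<omega> else m \<omega> * V s \<omega>)"

definition dyn_LM :: "'a measure \<Rightarrow> (nat \<Rightarrow> 'a measure) \<Rightarrow> nat \<Rightarrow> ennreal
     \<Rightarrow> (nat \<Rightarrow> (nat \<Rightarrow> 'a \<Rightarrow> real) \<Rightarrow> 'a \<Rightarrow> ereal) \<Rightarrow> bool" where
  "dyn_LM M F T p \<phi> \<longleftrightarrow>
     (\<forall>t\<le>T. \<forall>V\<in>Vp M F T p. \<phi> t V \<in> borel_measurable (F t)) \<and>
     (\<forall>t\<le>T. \<forall>A\<in>sets (F t). \<forall>V\<in>Vp M F T p.
        AE \<omega> in M. ereal (indicator A \<omega>) * \<phi> t V \<omega>
                   = ereal (indicator A \<omega>) * \<phi> t (dot_t (indicator A) t V) \<omega>) \<and>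
     (\<forall>t\<le>T. \<forall>V\<in>Vp M F T p. \<forall>W\<in>Vp M F T p.
        proc_le M T V W \<longrightarrow> (AE \<omega> in M. \<phi> t V \<omega> \<le> \<phi> t W \<omega>))"

definition is_cond_essinf :: "'a measure \<Rightarrow> 'a measure \<Rightarrow> ('a \<Rightarrow> ereal) \<Rightarrow> ('a \<Rightarrow> ereal) \<Rightarrow> bool" where
  "is_cond_essinf M G X Y \<longleftrightarrow> Y \<in> borel_measurable G \<and> (AE \<omega> in M. Y \<omega> \<le> X \<omega>) \<and>
     (\<forall>Z\<in>borel_measurable G. (AE \<omega> in M. Z \<omega> \<le> X \<omega>) \<longrightarrow> (AE \<omega> in M. Z \<omega> \<le> Y \<omega>))"

text \<open>Essinf_t for bounded X (a representative of the a.s.-unique class).\<close>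
definition essinf_b :: "'a measure \<Rightarrow> 'a measure \<Rightarrow> ('a \<Rightarrow> ereal) \<Rightarrow> ('a \<Rightarrow> ereal)" where
  "essinf_b M G X = (SOME Y. is_cond_essinf M G X Y)"

definition esssup_b :: "'a measure \<Rightarrow> 'a measure \<Rightarrow> ('a \<Rightarrow> ereal) \<Rightarrow> ('a \<Rightarrow> ereal)" where
  "esssup_b M G X = (\<lambda>\<omega>. - essinf_b M G (\<lambda>x. - X x) \<omega>)"

definition ereal_sub :: "ereal \<Rightarrow> ereal \<Rightarrow> ereal" where
  "ereal_sub a b = (if a = \<infinity> \<and> b = \<infinity> then -\<infinity> else a - b)"

text \<open>Essinf_t for [-inf,inf]-valued X: lim_n Essinf_t(X^+ /\ n) - lim_n Esssup_t(X^- /\ n);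
  both sequences are a.s. nondecreasing, so the limits are taken as suprema.\<close>
definition Essinf :: "'a measure \<Rightarrow> 'a measure \<Rightarrow> ('a \<Rightarrow> ereal) \<Rightarrow> ('a \<Rightarrow> ereal)" where
  "Essinf M G X = (\<lambda>\<omega>. ereal_sub
      (SUP n::nat. essinf_b M G (\<lambda>x. min (max (X x) 0) (ereal (real n))) \<omega>)
      (SUP n::nat. esssup_b M G (\<lambda>x. min (max (- X x) 0) (ereal (real n))) \<omega>))"

definition Esssup :: "'a measure \<Rightarrow> 'a measure \<Rightarrow> ('a \<Rightarrow> ereal) \<Rightarrow> ('a \<Rightarrow> ereal)" where
  "Esssup M G X = (\<lambda>\<omega>. - Essinf M G (\<lambda>x. - X x) \<omega>)"

end

theory Submission
  imports Defs
begin



lemma max_set_exists: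
  assumes fm: "finite_measure M"
    and sub: "\<C> \<subseteq> sets M" and e: "{} \<in> \<C>"
    and un: "\<And>f::nat \<Rightarrow> 'a set. range f \<subseteq> \<C> \<Longrightarrow> (\<Union>i. f i) \<in> \<C>"
  shows "\<exists>B\<in>\<C>. \<forall>C\<in>\<C>. measure M (C - B) = 0"
proof -
  interpret finite_measure M by fact
  define c where "c = Sup (measure M ` \<C>)"
  have bdd: "bdd_above (measure M ` \<C>)"
    by (rule bdd_aboveI[of _ "measure M (space M)"]) (use sub in \<open>auto intro: bounded_measure\<close>)
  have ne: "measure M ` \<C> \<noteq> {}" using e by auto
  have "\<forall>n::nat. \<exists>C\<in>\<C>. c - 1/(Suc n) < measure M C"
  proof
    fix n :: nat
    have "c - 1/(Suc n) < c" by simp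
    then obtain x where "x \<in> measure M ` \<C>" "c - 1/(Suc n) < x"
      using less_cSupD[OF ne] unfolding c_def by blast
    then show "\<exists>C\<in>\<C>. c - 1/(Suc n) < measure M C" by auto
  qed
  then obtain f where f: "\<And>n. f n \<in> \<C>" "\<And>n. c - 1/(Suc n) < measure M (f n)"
    by metis
  define B where "B = (\<Union>i. f i)"
  have B: "B \<in> \<C>" unfolding B_def using un f(1) by blast
  have Bc: "measure M B \<le> c" unfolding c_def using B bdd by (auto intro: cSup_upper)
  have "\<And>n. c - 1/(Suc n) < measure M B"
  proof -
    fix n
    have "measure M (f n) \<le> measure M B"
      unfolding B_def by (rule finite_measure_mono) (use B sub f in \<open>auto simp: B_def\<close>)
    then show "c - 1/(Suc n) < measure M B" using f(2)[of n] by linarith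
  qed
  have cB: "c \<le> measure M B"
  proof (rule ccontr)
    assume "\<not> c \<le> measure M B"
    hence "0 < c - measure M B" by simp
    then obtain n where "inverse (real (Suc n)) < c - measure M B"
      using reals_Archimedean by blast
    with \<open>\<And>n. c - 1/(Suc n) < measure M B\<close>[of n] show False
      by (simp add: field_simps)
  qed
  show ?thesis
  proof (intro bexI[OF _ B] ballI)
    fix C assume C: "C \<in> \<C>"
    define g where "g = (\<lambda>n::nat. if n = 0 then B else C)"
    have "range g \<subseteq> \<C>" using B C by (auto simp: g_def)
    hence "(\<Union>i. g i) \<in> \<C>" by (rule un)
    moreover have "(\<Union>i. g i) = B \<union> C" by (auto simp: g_def split: if_splits)
    ultimately have BC: "B \<union> C \<in> \<C>" by simp
    have "measure M (B \<union> C) \<le> c" unfolding c_def using BC bdd by (auto intro: cSup_upper)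
    moreover have "measure M (B \<union> C) = measure M B + measure M (C - B)"
      using finite_measure_Union[of B "C - B"] B C sub
      by (metis Diff_disjoint Un_Diff_cancel subsetD sets.Diff)
    ultimately show "measure M (C - B) = 0" using cB measure_nonneg[of M "C - B"] by linarith
  qed
qed

lemma cond_essinf_exists:
  assumes P: "prob_space M" and sub: "subalgebra M G"
  shows "\<exists>Y. is_cond_essinf M G X Y"
proof -
  interpret prob_space M by fact
  have spG: "space G = space M" and sG: "sets G \<subseteq> sets M" using sub by (auto simp: subalgebra_def)
  define \<C> where "\<C> q = {B \<in> sets G. AE \<omega> in M. \<omega> \<in> B \<longrightarrow> ereal q \<le> X \<omega>}" for q :: real
  have "\<exists>B\<in>\<C> q. \<forall>C\<in>\<C> q. measure M (C - B) = 0" for q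
  proof (rule max_set_exists)
    show "finite_measure M" by (rule finite_measure_axioms)
    show "\<C> q \<subseteq> sets M" using sG by (auto simp: \<C>_def)
    show "{} \<in> \<C> q" by (auto simp: \<C>_def)
    fix f :: "nat \<Rightarrow> 'a set" assume "range f \<subseteq> \<C> q"
    hence f: "\<And>i. f i \<in> sets G" "\<And>i. AE \<omega> in M. \<omega> \<in> f i \<longrightarrow> ereal q \<le> X \<omega>"
      by (auto simp: \<C>_def)
    have "AE \<omega> in M. \<forall>i. \<omega> \<in> f i \<longrightarrow> ereal q \<le> X \<omega>"
      by (subst AE_all_countable) (intro allI f(2))
    hence "AE \<omega> in M. \<omega> \<in> (\<Union>i. f i) \<longrightarrow> ereal q \<le> X \<omega>" by (rule AE_mp) auto
    moreover have "(\<Union>i. f i) \<in> sets G" using f(1) by auto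
    ultimately show "(\<Union>i. f i) \<in> \<C> q" by (auto simp: \<C>_def)
  qed
  then obtain B where B: "\<And>q. B q \<in> \<C> q" "\<And>q C. C \<in> \<C> q \<Longrightarrow> measure M (C - B q) = 0"
    by metis
  have BG: "B q \<in> sets G" for q using B(1) by (auto simp: \<C>_def)
  define Y where "Y \<omega> = (SUP q\<in>\<rat>. (if \<omega> \<in> B q then ereal q else -\<infinity>))" for \<omega>
  have "Y \<in> borel_measurable G"
    unfolding Y_def
  proof (rule borel_measurable_SUP)
    show "countable \<rat>" by (rule countable_rat)
    fix q :: real
    show "(\<lambda>\<omega>. if \<omega> \<in> B q then ereal q else - \<infinity>) \<in> borel_measurable G"
      by (rule measurable_If_set) (use BG in auto)
  qed
  moreover have "AE \<omega> in M. Y \<omega> \<le> X \<omega>"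
  proof -
    have "AE \<omega> in M. \<forall>q\<in>\<rat>. \<omega> \<in> B q \<longrightarrow> ereal q \<le> X \<omega>"
      using B(1) countable_rat by (subst AE_ball_countable) (auto simp: \<C>_def)
    thus ?thesis by (rule AE_mp, intro AE_I2 impI) (unfold Y_def, rule SUP_least, auto)
  qed
  moreover have "AE \<omega> in M. Z \<omega> \<le> Y \<omega>" if Z: "Z \<in> borel_measurable G" "AE \<omega> in M. Z \<omega> \<le> X \<omega>" for Z
  proof -
    have "AE \<omega> in M. \<omega> \<notin> {\<omega>\<in>space G. ereal q \<le> Z \<omega>} - B q" if "q \<in> \<rat>" for q
    proof (rule AE_not_in)
      have C: "{\<omega>\<in>space G. ereal q \<le> Z \<omega>} \<in> \<C> q"
        unfolding \<C>_def using Z by (auto elim!: AE_mp)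
      hence "measure M ({\<omega>\<in>space G. ereal q \<le> Z \<omega>} - B q) = 0" by (rule B(2))
      moreover have "{\<omega>\<in>space G. ereal q \<le> Z \<omega>} - B q \<in> sets M" using C BG sG by (auto simp: \<C>_def)
      ultimately show "{\<omega>\<in>space G. ereal q \<le> Z \<omega>} - B q \<in> null_sets M"
        by (simp add: emeasure_eq_measure null_sets_def)
    qed
    hence "AE \<omega> in M. \<forall>q\<in>\<rat>. \<omega> \<notin> {\<omega>\<in>space G. ereal q \<le> Z \<omega>} - B q"
      using countable_rat by (subst AE_ball_countable) auto
    thus ?thesis
    proof (rule AE_mp, intro AE_I2 impI)
      fix \<omega> assume \<omega>: "\<omega> \<in> space M" and H: "\<forall>q\<in>\<rat>. \<omega> \<notin> {\<omega>\<in>space G. ereal q \<le> Z \<omega>} - B q"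
      show "Z \<omega> \<le> Y \<omega>"
      proof (rule ccontr)
        assume "\<not> Z \<omega> \<le> Y \<omega>"
        hence "Y \<omega> < Z \<omega>" by simp
        then obtain r where r: "Y \<omega> < ereal r" "ereal r < Z \<omega>" using ereal_dense2 by blast
        then obtain r' where r': "Y \<omega> < ereal r'" "ereal r' < ereal r" using ereal_dense2 by blast
        then obtain q where q: "q \<in> \<rat>" "r' < q" "q < r" using Rats_dense_in_real by auto
        have "ereal q \<le> Z \<omega>" using q r by (meson ereal_less_eq(3) less_eq_real_def order_trans r(2) less_imp_le)
        hence "\<omega> \<in> B q" using H q \<omega> spG by auto
        hence "ereal q \<le> Y \<omega>" unfolding Y_def using q by (intro SUP_upper2[of q]) auto
        moreover have "ereal r' < ereal q" using q by simp
        hence "Y \<omega> < ereal q" using r'(1) by (rule less_trans[rotated])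
        with \<open>ereal q \<le> Y \<omega>\<close> show False by simp
      qed
    qed
  qed
  ultimately show ?thesis unfolding is_cond_essinf_def by blast
qed

lemma essinf_b:
  assumes "prob_space M" "subalgebra M G"
  shows "is_cond_essinf M G X (essinf_b M G X)"
  unfolding essinf_b_def using cond_essinf_exists[OF assms] by (rule someI_ex)



lemma ereal_all_nat_le: "(\<And>n::nat. min y (ereal (real n)) \<le> b) \<Longrightarrow> y \<le> (b::ereal)"
proof (cases y)
  case (real r)
  obtain n :: nat where "r \<le> real n" using real_arch_simple by blast
  moreover assume "\<And>n::nat. min y (ereal (real n)) \<le> b"
  ultimately show ?thesis using real by (metis ereal_less_eq(3) min.absorb1)
next
  case PInf
  assume H: "\<And>n::nat. min y (ereal (real n)) \<le> b"
  show ?thesis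
  proof (cases b)
    case (real s)
    obtain n :: nat where "s < real n" using reals_Archimedean2 by blast
    with H[of n] PInf real show ?thesis by simp
  qed (use PInf H in auto)
qed simp

lemma ereal_sub_le: "a \<le> max x 0 \<Longrightarrow> max (-x) 0 \<le> b \<Longrightarrow> ereal_sub a b \<le> (x::ereal)"
  by (cases a; cases b; cases x) (auto simp: ereal_sub_def max_def split: if_splits)

lemma ereal_sub_ge: "max m 0 \<le> a \<Longrightarrow> b \<le> max (-m) 0 \<Longrightarrow> m \<le> ereal_sub a (b::ereal)"
  by (cases a; cases b; cases m) (auto simp: ereal_sub_def max_def split: if_splits)



context
  fixes M G
  assumes P: "prob_space M" and sub: "subalgebra M G"
begin

lemma eb_meas[measurable]: "essinf_b M G X \<in> borel_measurable G"
  using essinf_b[OF P sub] by (simp add: is_cond_essinf_def)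

lemma eb_le: "AE \<omega> in M. essinf_b M G X \<omega> \<le> X \<omega>"
  using essinf_b[OF P sub] by (simp add: is_cond_essinf_def)

lemma eb_ge: "Z \<in> borel_measurable G \<Longrightarrow> AE \<omega> in M. Z \<omega> \<le> X \<omega> \<Longrightarrow> AE \<omega> in M. Z \<omega> \<le> essinf_b M G X \<omega>"
  using essinf_b[OF P sub] by (simp add: is_cond_essinf_def)

lemma Essinf_meas[measurable]: "Essinf M G X \<in> borel_measurable G"
  unfolding Essinf_def ereal_sub_def esssup_b_def by measurable

lemma Essinf_le: "AE \<omega> in M. Essinf M G X \<omega> \<le> X \<omega>"
proof -
  have "AE \<omega> in M. \<forall>n::nat. essinf_b M G (\<lambda>x. min (max (X x) 0) (ereal (real n))) \<omega> \<le> min (max (X \<omega>) 0) (ereal (real n))"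
    by (subst AE_all_countable) (intro allI eb_le)
  moreover have "AE \<omega> in M. \<forall>n::nat. essinf_b M G (\<lambda>x. - min (max (- X x) 0) (ereal (real n))) \<omega> \<le> - min (max (- X \<omega>) 0) (ereal (real n))"
    by (subst AE_all_countable) (intro allI eb_le)
  ultimately show ?thesis
  proof (eventually_elim)
    case (elim \<omega>)
    show ?case unfolding Essinf_def
    proof (rule ereal_sub_le)
      show "(SUP n::nat. essinf_b M G (\<lambda>x. min (max (X x) 0) (ereal (real n))) \<omega>) \<le> max (X \<omega>) 0"
        using elim(1) by (intro SUP_least) (meson min.cobounded1 order_trans)
      show "max (- X \<omega>) 0 \<le> (SUP n::nat. esssup_b M G (\<lambda>x. min (max (- X x) 0) (ereal (real n))) \<omega>)"
      proof (rule ereal_all_nat_le)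
        fix n :: nat
        have "min (max (- X \<omega>) 0) (ereal (real n)) \<le> esssup_b M G (\<lambda>x. min (max (- X x) 0) (ereal (real n))) \<omega>"
          using elim(2)[rule_format, of n] unfolding esssup_b_def by (metis ereal_uminus_le_reorder ereal_uminus_uminus)
        also have "\<dots> \<le> (SUP n::nat. esssup_b M G (\<lambda>x. min (max (- X x) 0) (ereal (real n))) \<omega>)"
          by (rule SUP_upper) simp
        finally show "min (max (- X \<omega>) 0) (ereal (real n)) \<le> \<dots>" .
      qed
    qed
  qed
qed

lemma Essinf_ge:
  assumes m: "m \<in> borel_measurable G" and le: "AE \<omega> in M. m \<omega> \<le> X \<omega>"
  shows "AE \<omega> in M. m \<omega> \<le> Essinf M G X \<omega>"
proof -
  have "AE \<omega> in M. \<forall>n::nat. min (max (m \<omega>) 0) (ereal (real n)) \<le> essinf_b M G (\<lambda>x. min (max (X x) 0) (ereal (real n))) \<omega>"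
  proof (subst AE_all_countable, intro allI eb_ge)
    fix n :: nat
    show "(\<lambda>\<omega>. min (max (m \<omega>) 0) (ereal (real n))) \<in> borel_measurable G" using m by measurable
    show "AE \<omega> in M. min (max (m \<omega>) 0) (ereal (real n)) \<le> min (max (X \<omega>) 0) (ereal (real n))"
      using le by eventually_elim (auto simp: min_def max_def)
  qed
  moreover have "AE \<omega> in M. \<forall>n::nat. - min (max (- m \<omega>) 0) (ereal (real n)) \<le> essinf_b M G (\<lambda>x. - min (max (- X x) 0) (ereal (real n))) \<omega>"
  proof (subst AE_all_countable, intro allI eb_ge)
    fix n :: nat
    show "(\<lambda>\<omega>. - min (max (- m \<omega>) 0) (ereal (real n))) \<in> borel_measurable G" using m by measurable
    show "AE \<omega> in M. - min (max (- m \<omega>) 0) (ereal (real n)) \<le> - min (max (- X \<omega>) 0) (ereal (real n))"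
      using le by eventually_elim (simp only: ereal_minus_le_minus, intro min.mono max.mono, auto)
  qed
  ultimately show ?thesis
  proof (eventually_elim)
    case (elim \<omega>)
    show ?case unfolding Essinf_def
    proof (rule ereal_sub_ge)
      show "max (m \<omega>) 0 \<le> (SUP n::nat. essinf_b M G (\<lambda>x. min (max (X x) 0) (ereal (real n))) \<omega>)"
      proof (rule ereal_all_nat_le)
        fix n :: nat
        show "min (max (m \<omega>) 0) (ereal (real n)) \<le> (SUP n::nat. essinf_b M G (\<lambda>x. min (max (X x) 0) (ereal (real n))) \<omega>)"
          using elim(1)[rule_format, of n] by (meson SUP_upper2 UNIV_I)
      qed
      show "(SUP n::nat. esssup_b M G (\<lambda>x. min (max (- X x) 0) (ereal (real n))) \<omega>) \<le> max (- m \<omega>) 0"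
      proof (rule SUP_least)
        fix n :: nat
        have "esssup_b M G (\<lambda>x. min (max (- X x) 0) (ereal (real n))) \<omega> \<le> min (max (- m \<omega>) 0) (ereal (real n))"
          using elim(2)[rule_format, of n] unfolding esssup_b_def by (metis ereal_uminus_le_reorder ereal_uminus_uminus)
        also have "\<dots> \<le> max (- m \<omega>) 0" by simp
        finally show "esssup_b M G (\<lambda>x. min (max (- X x) 0) (ereal (real n))) \<omega> \<le> max (- m \<omega>) 0" .
      qed
    qed
  qed
qed

lemma Essinf_mono: assumes "AE \<omega> in M. X \<omega> \<le> Y \<omega>" shows "AE \<omega> in M. Essinf M G X \<omega> \<le> Essinf M G Y \<omega>"
proof (rule Essinf_ge[OF Essinf_meas])
  show "AE \<omega> in M. Essinf M G X \<omega> \<le> Y \<omega>" using Essinf_le[of X] assms by eventually_elim auto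
qed

lemma Esssup_meas[measurable]: "Esssup M G X \<in> borel_measurable G"
  unfolding Esssup_def by measurable

lemma Esssup_ge: "AE \<omega> in M. X \<omega> \<le> Esssup M G X \<omega>"
  using Essinf_le[of "\<lambda>x. - X x"] unfolding Esssup_def
  by eventually_elim (metis ereal_uminus_le_reorder ereal_uminus_uminus)

lemma Esssup_le:
  assumes m: "m \<in> borel_measurable G" and le: "AE \<omega> in M. X \<omega> \<le> m \<omega>"
  shows "AE \<omega> in M. Esssup M G X \<omega> \<le> m \<omega>"
proof -
  have "AE \<omega> in M. - m \<omega> \<le> Essinf M G (\<lambda>x. - X x) \<omega>"
  proof (rule Essinf_ge)
    show "(\<lambda>\<omega>. - m \<omega>) \<in> borel_measurable G" using m by measurable
    show "AE \<omega> in M. - m \<omega> \<le> - X \<omega>" using le by eventually_elim simp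
  qed
  thus ?thesis unfolding Esssup_def by eventually_elim (metis ereal_uminus_le_reorder ereal_uminus_uminus)
qed

lemma Esssup_mono: assumes "AE \<omega> in M. X \<omega> \<le> Y \<omega>" shows "AE \<omega> in M. Esssup M G X \<omega> \<le> Esssup M G Y \<omega>"
proof (rule Esssup_le[OF Esssup_meas])
  show "AE \<omega> in M. X \<omega> \<le> Esssup M G Y \<omega>" using Esssup_ge[of Y] assms by eventually_elim auto
qed

end



context
  fixes M :: "'a measure" and F :: "nat \<Rightarrow> 'a measure" and T :: nat and p :: ennreal
    and \<phi> :: "nat \<Rightarrow> (nat \<Rightarrow> 'a \<Rightarrow> real) \<Rightarrow> 'a \<Rightarrow> ereal"
  assumes P: "prob_space M" and filt: "filtration M F T" and LM: "dyn_LM M F T p \<phi>"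
begin

lemma subF: "t \<le> T \<Longrightarrow> subalgebra M (F t)"
  using filt by (simp add: filtration_def)

lemma spF: "t \<le> T \<Longrightarrow> space (F t) = space M"
  using subF by (simp add: subalgebra_def)

lemma sF: "t \<le> T \<Longrightarrow> A \<in> sets (F t) \<Longrightarrow> A \<in> sets M"
  using subF by (auto simp: subalgebra_def)

lemma sF_mono: "s \<le> t \<Longrightarrow> t \<le> T \<Longrightarrow> A \<in> sets (F s) \<Longrightarrow> A \<in> sets (F t)"
  using filt by (auto simp: filtration_def)

lemma Vp_meas: "V \<in> Vp M F T p \<Longrightarrow> t \<le> T \<Longrightarrow> V t \<in> borel_measurable (F t)"
  by (simp add: Vp_def in_Lp_def)

lemma phi_meas: "V \<in> Vp M F T p \<Longrightarrow> t \<le> T \<Longrightarrow> \<phi> t V \<in> borel_measurable (F t)"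
  using LM by (simp add: dyn_LM_def)

lemma loc: assumes "t \<le> T" "A \<in> sets (F t)" "V \<in> Vp M F T p"
  shows "AE \<omega> in M. \<omega> \<in> A \<longrightarrow> \<phi> t V \<omega> = \<phi> t (dot_t (indicator A) t V) \<omega>"
proof -
  have "AE \<omega> in M. ereal (indicator A \<omega>) * \<phi> t V \<omega> = ereal (indicator A \<omega>) * \<phi> t (dot_t (indicator A) t V) \<omega>"
    using LM assms by (simp add: dyn_LM_def)
  thus ?thesis by eventually_elim (auto simp: indicator_def one_ereal_def[symmetric])
qed

lemma mono: assumes "t \<le> T" "V \<in> Vp M F T p" "W \<in> Vp M F T p"
   "\<And>s \<omega>. s \<le> T \<Longrightarrow> \<omega> \<in> space M \<Longrightarrow> V s \<omega> \<le> W s \<omega>"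
  shows "AE \<omega> in M. \<phi> t V \<omega> \<le> \<phi> t W \<omega>"
proof -
  have "proc_le M T V W" unfolding proc_le_def using assms(4) by auto
  thus ?thesis using LM assms by (simp add: dyn_LM_def)
qed

lemma dot_Vp: assumes "t \<le> T" "A \<in> sets (F t)" "V \<in> Vp M F T p"
  shows "dot_t (indicator A) t V \<in> Vp M F T p"
  unfolding Vp_def
proof (intro CollectI allI impI)
  fix s assume s: "s \<le> T"
  show "in_Lp M (F s) p (dot_t (indicator A) t V s)"
  proof (cases "s < t")
    case True
    then show ?thesis using assms s by (simp add: dot_t_def Vp_def)
  next
    case False
    hence As: "A \<in> sets (F s)" using sF_mono[of t s A] assms s by simp
    have Vs: "in_Lp M (F s) p (V s)" using assms s by (simp add: Vp_def)
    have eq: "dot_t (indicator A) t V s = (\<lambda>\<omega>. indicator A \<omega> * V s \<omega>)"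
      using False by (simp add: dot_t_def fun_eq_iff)
    have meas: "(\<lambda>\<omega>. indicator A \<omega> * V s \<omega>) \<in> borel_measurable (F s)"
    proof -
      have [measurable]: "V s \<in> borel_measurable (F s)" using Vs by (simp add: in_Lp_def)
      show ?thesis using As by measurable
    qed
    have AM: "A \<in> sets M" using sF[OF s As] .
    show ?thesis unfolding eq in_Lp_def
    proof (intro conjI meas)
      show "if p = 0 then True else if p = 1 then integrable M (\<lambda>\<omega>. indicator A \<omega> * V s \<omega>)
            else \<exists>C. AE \<omega> in M. \<bar>indicator A \<omega> * V s \<omega>\<bar> \<le> C"
      proof (cases "p = 0")
        case False
        show ?thesis
        proof (cases "p = 1")
          case True
          hence "integrable M (V s)" using Vs False by (simp add: in_Lp_def)
          from integrable_mult_indicator[OF AM this] show ?thesis using True False by simp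
        next
          case False2: False
          then obtain C where "AE \<omega> in M. \<bar>V s \<omega>\<bar> \<le> C" using Vs False by (auto simp: in_Lp_def)
          hence "AE \<omega> in M. \<bar>indicator A \<omega> * V s \<omega>\<bar> \<le> C"
            by eventually_elim (auto simp: indicator_def)
          thus ?thesis using False False2 by auto
        qed
      qed simp
    qed
  qed
qed


lemma acc12:
   "((\<forall>V\<in>Vp M F T p. \<forall>t<T. \<forall>m \<in> borel_measurable (F (Suc t)).
        (AE \<omega> in M. \<phi> (Suc t) V \<omega> \<ge> m \<omega>) \<longrightarrow>
        (AE \<omega> in M. \<phi> t V \<omega> \<ge> (if V t \<omega> \<ge> 0 then Essinf M (F t) m \<omega> else -\<infinity>)))
     \<longleftrightarrow>
     (\<forall>V\<in>Vp M F T p. \<forall>t<T.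
        AE \<omega> in M. \<phi> t V \<omega> \<ge> (if V t \<omega> \<ge> 0 then Essinf M (F t) (\<phi> (Suc t) V) \<omega> else -\<infinity>)))"
proof (intro iffI ballI allI impI)
  fix V t assume H: "\<forall>V\<in>Vp M F T p. \<forall>t<T. \<forall>m \<in> borel_measurable (F (Suc t)).
        (AE \<omega> in M. \<phi> (Suc t) V \<omega> \<ge> m \<omega>) \<longrightarrow>
        (AE \<omega> in M. \<phi> t V \<omega> \<ge> (if V t \<omega> \<ge> 0 then Essinf M (F t) m \<omega> else -\<infinity>))"
    and V: "V \<in> Vp M F T p" and t: "t < T"
  show "AE \<omega> in M. \<phi> t V \<omega> \<ge> (if V t \<omega> \<ge> 0 then Essinf M (F t) (\<phi> (Suc t) V) \<omega> else -\<infinity>)"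
    using H V t phi_meas[OF V, of "Suc t"] by auto
next
  fix V t m assume H: "\<forall>V\<in>Vp M F T p. \<forall>t<T.
        AE \<omega> in M. \<phi> t V \<omega> \<ge> (if V t \<omega> \<ge> 0 then Essinf M (F t) (\<phi> (Suc t) V) \<omega> else -\<infinity>)"
    and V: "V \<in> Vp M F T p" and t: "t < T" and m: "m \<in> borel_measurable (F (Suc t))"
    and le: "AE \<omega> in M. \<phi> (Suc t) V \<omega> \<ge> m \<omega>"
  have "AE \<omega> in M. Essinf M (F t) m \<omega> \<le> Essinf M (F t) (\<phi> (Suc t) V) \<omega>"
    using Essinf_mono[OF P subF[of t]] le t by simp
  moreover have "AE \<omega> in M. \<phi> t V \<omega> \<ge> (if V t \<omega> \<ge> 0 then Essinf M (F t) (\<phi> (Suc t) V) \<omega> else -\<infinity>)"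
    using H V t by auto
  ultimately show "AE \<omega> in M. \<phi> t V \<omega> \<ge> (if V t \<omega> \<ge> 0 then Essinf M (F t) m \<omega> else -\<infinity>)"
    by eventually_elim (auto split: if_splits)
qed

lemma acc23:
   "((\<forall>V\<in>Vp M F T p. \<forall>t<T.
        AE \<omega> in M. \<phi> t V \<omega> \<ge> (if V t \<omega> \<ge> 0 then Essinf M (F t) (\<phi> (Suc t) V) \<omega> else -\<infinity>))
     \<longleftrightarrow>
     (\<forall>V\<in>Vp M F T p. \<forall>t<T. \<forall>m \<in> borel_measurable (F t).
        (AE \<omega> in M. V t \<omega> \<ge> 0) \<longrightarrow> (AE \<omega> in M. \<phi> (Suc t) V \<omega> \<ge> m \<omega>) \<longrightarrow>
        (AE \<omega> in M. \<phi> t V \<omega> \<ge> m \<omega>)))"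
proof (intro iffI ballI allI impI)
  fix V t m assume H: "\<forall>V\<in>Vp M F T p. \<forall>t<T.
        AE \<omega> in M. \<phi> t V \<omega> \<ge> (if V t \<omega> \<ge> 0 then Essinf M (F t) (\<phi> (Suc t) V) \<omega> else -\<infinity>)"
    and V: "V \<in> Vp M F T p" and t: "t < T" and m: "m \<in> borel_measurable (F t)"
    and pos: "AE \<omega> in M. V t \<omega> \<ge> 0" and le: "AE \<omega> in M. \<phi> (Suc t) V \<omega> \<ge> m \<omega>"
  have "AE \<omega> in M. m \<omega> \<le> Essinf M (F t) (\<phi> (Suc t) V) \<omega>"
    using Essinf_ge[OF P subF[of t] m] le t by simp
  moreover have "AE \<omega> in M. \<phi> t V \<omega> \<ge> (if V t \<omega> \<ge> 0 then Essinf M (F t) (\<phi> (Suc t) V) \<omega> else -\<infinity>)"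
    using H V t by auto
  ultimately show "AE \<omega> in M. \<phi> t V \<omega> \<ge> m \<omega>" using pos
    by eventually_elim auto
next
  fix V t assume H: "\<forall>V\<in>Vp M F T p. \<forall>t<T. \<forall>m \<in> borel_measurable (F t).
        (AE \<omega> in M. V t \<omega> \<ge> 0) \<longrightarrow> (AE \<omega> in M. \<phi> (Suc t) V \<omega> \<ge> m \<omega>) \<longrightarrow>
        (AE \<omega> in M. \<phi> t V \<omega> \<ge> m \<omega>)"
    and V: "V \<in> Vp M F T p" and t: "t < T"
  have tT: "t \<le> T" and tT': "Suc t \<le> T" using t by auto
  define A where "A = {\<omega>\<in>space M. 0 \<le> V t \<omega>}"
  have [measurable]: "V t \<in> borel_measurable (F t)" using Vp_meas[OF V tT] .
  have A: "A \<in> sets (F t)"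
  proof -
    have "{\<omega>\<in>space (F t). 0 \<le> V t \<omega>} \<in> sets (F t)" by measurable
    thus ?thesis using spF[OF tT] by (simp add: A_def)
  qed
  have A': "A \<in> sets (F (Suc t))" using sF_mono[OF _ tT' A] by simp
  define W where "W = dot_t (indicator A) t V"
  define V' where "V' = dot_t (indicator A) (Suc t) V"
  have W: "W \<in> Vp M F T p" unfolding W_def by (rule dot_Vp[OF tT A V])
  have V': "V' \<in> Vp M F T p" unfolding V'_def by (rule dot_Vp[OF tT' A' V])
  have H1: "AE \<omega> in M. \<omega> \<in> A \<longrightarrow> \<phi> (Suc t) V \<omega> = \<phi> (Suc t) V' \<omega>"
    unfolding V'_def by (rule loc[OF tT' A' V])
  have H2: "AE \<omega> in M. \<phi> (Suc t) V' \<omega> \<le> \<phi> (Suc t) W \<omega>"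
  proof (rule mono[OF tT' V' W])
    fix s \<omega> assume "s \<le> T" "\<omega> \<in> space M"
    thus "V' s \<omega> \<le> W s \<omega>"
      unfolding V'_def W_def dot_t_def A_def
      by (cases "s < t"; cases "s = t") (auto simp: indicator_def)
  qed
  have H3: "AE \<omega> in M. Essinf M (F t) (\<phi> (Suc t) V) \<omega> \<le> \<phi> (Suc t) V \<omega>"
    by (rule Essinf_le[OF P subF[OF tT]])
  define m where "m \<omega> = (if \<omega> \<in> A then Essinf M (F t) (\<phi> (Suc t) V) \<omega> else -\<infinity>)" for \<omega>
  have mm: "m \<in> borel_measurable (F t)"
    unfolding m_def
    by (rule measurable_If_set) (use A Essinf_meas[OF P subF[OF tT]] in auto)
  have Wpos: "AE \<omega> in M. W t \<omega> \<ge> 0"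
    by (rule AE_I2) (auto simp: W_def dot_t_def A_def indicator_def)
  have "AE \<omega> in M. \<phi> (Suc t) W \<omega> \<ge> m \<omega>"
    using H1 H2 H3 by eventually_elim (auto simp: m_def)
  hence H5: "AE \<omega> in M. \<phi> t W \<omega> \<ge> m \<omega>" using H W t mm Wpos by blast
  have H4: "AE \<omega> in M. \<omega> \<in> A \<longrightarrow> \<phi> t V \<omega> = \<phi> t W \<omega>"
    unfolding W_def by (rule loc[OF tT A V])
  show "AE \<omega> in M. \<phi> t V \<omega> \<ge> (if V t \<omega> \<ge> 0 then Essinf M (F t) (\<phi> (Suc t) V) \<omega> else -\<infinity>)"
    using H4 H5 AE_space
  proof (eventually_elim)
    case (elim \<omega>)
    show ?case
    proof (cases "V t \<omega> \<ge> 0")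
      case True
      hence "\<omega> \<in> A" using elim by (simp add: A_def)
      thus ?thesis using elim True by (simp add: m_def)
    qed simp
  qed
qed


lemma rej12:
   "((\<forall>V\<in>Vp M F T p. \<forall>t<T. \<forall>m \<in> borel_measurable (F (Suc t)).
        (AE \<omega> in M. \<phi> (Suc t) V \<omega> \<le> m \<omega>) \<longrightarrow>
        (AE \<omega> in M. \<phi> t V \<omega> \<le> (if V t \<omega> \<le> 0 then Esssup M (F t) m \<omega> else \<infinity>)))
     \<longleftrightarrow>
     (\<forall>V\<in>Vp M F T p. \<forall>t<T.
        AE \<omega> in M. \<phi> t V \<omega> \<le> (if V t \<omega> \<le> 0 then Esssup M (F t) (\<phi> (Suc t) V) \<omega> else \<infinity>)))"
proof (intro iffI ballI allI impI)
  fix V t assume H: "\<forall>V\<in>Vp M F T p. \<forall>t<T. \<forall>m \<in> borel_measurable (F (Suc t)).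
        (AE \<omega> in M. \<phi> (Suc t) V \<omega> \<le> m \<omega>) \<longrightarrow>
        (AE \<omega> in M. \<phi> t V \<omega> \<le> (if V t \<omega> \<le> 0 then Esssup M (F t) m \<omega> else \<infinity>))"
    and V: "V \<in> Vp M F T p" and t: "t < T"
  show "AE \<omega> in M. \<phi> t V \<omega> \<le> (if V t \<omega> \<le> 0 then Esssup M (F t) (\<phi> (Suc t) V) \<omega> else \<infinity>)"
    using H V t phi_meas[OF V, of "Suc t"] by auto
next
  fix V t m assume H: "\<forall>V\<in>Vp M F T p. \<forall>t<T.
        AE \<omega> in M. \<phi> t V \<omega> \<le> (if V t \<omega> \<le> 0 then Esssup M (F t) (\<phi> (Suc t) V) \<omega> else \<infinity>)"
    and V: "V \<in> Vp M F T p" and t: "t < T" and m: "m \<in> borel_measurable (F (Suc t))"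
    and le: "AE \<omega> in M. \<phi> (Suc t) V \<omega> \<le> m \<omega>"
  have "AE \<omega> in M. Esssup M (F t) (\<phi> (Suc t) V) \<omega> \<le> Esssup M (F t) m \<omega>"
    using Esssup_mono[OF P subF[of t]] le t by simp
  moreover have "AE \<omega> in M. \<phi> t V \<omega> \<le> (if V t \<omega> \<le> 0 then Esssup M (F t) (\<phi> (Suc t) V) \<omega> else \<infinity>)"
    using H V t by auto
  ultimately show "AE \<omega> in M. \<phi> t V \<omega> \<le> (if V t \<omega> \<le> 0 then Esssup M (F t) m \<omega> else \<infinity>)"
    by eventually_elim (auto split: if_splits)
qed

lemma rej23:
   "((\<forall>V\<in>Vp M F T p. \<forall>t<T.
        AE \<omega> in M. \<phi> t V \<omega> \<le> (if V t \<omega> \<le> 0 then Esssup M (F t) (\<phi> (Suc t) V) \<omega> else \<infinity>))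
     \<longleftrightarrow>
     (\<forall>V\<in>Vp M F T p. \<forall>t<T. \<forall>m \<in> borel_measurable (F t).
        (AE \<omega> in M. V t \<omega> \<le> 0) \<longrightarrow> (AE \<omega> in M. \<phi> (Suc t) V \<omega> \<le> m \<omega>) \<longrightarrow>
        (AE \<omega> in M. \<phi> t V \<omega> \<le> m \<omega>)))"
proof (intro iffI ballI allI impI)
  fix V t m assume H: "\<forall>V\<in>Vp M F T p. \<forall>t<T.
        AE \<omega> in M. \<phi> t V \<omega> \<le> (if V t \<omega> \<le> 0 then Esssup M (F t) (\<phi> (Suc t) V) \<omega> else \<infinity>)"
    and V: "V \<in> Vp M F T p" and t: "t < T" and m: "m \<in> borel_measurable (F t)"
    and pos: "AE \<omega> in M. V t \<omega> \<le> 0" and le: "AE \<omega> in M. \<phi> (Suc t) V \<omega> \<le> m \<omega>"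
  have "AE \<omega> in M. Esssup M (F t) (\<phi> (Suc t) V) \<omega> \<le> m \<omega>"
    using Esssup_le[OF P subF[of t] m] le t by simp
  moreover have "AE \<omega> in M. \<phi> t V \<omega> \<le> (if V t \<omega> \<le> 0 then Esssup M (F t) (\<phi> (Suc t) V) \<omega> else \<infinity>)"
    using H V t by auto
  ultimately show "AE \<omega> in M. \<phi> t V \<omega> \<le> m \<omega>" using pos
    by eventually_elim auto
next
  fix V t assume H: "\<forall>V\<in>Vp M F T p. \<forall>t<T. \<forall>m \<in> borel_measurable (F t).
        (AE \<omega> in M. V t \<omega> \<le> 0) \<longrightarrow> (AE \<omega> in M. \<phi> (Suc t) V \<omega> \<le> m \<omega>) \<longrightarrow>
        (AE \<omega> in M. \<phi> t V \<omega> \<le> m \<omega>)"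
    and V: "V \<in> Vp M F T p" and t: "t < T"
  have tT: "t \<le> T" and tT': "Suc t \<le> T" using t by auto
  define A where "A = {\<omega>\<in>space M. V t \<omega> \<le> 0}"
  have [measurable]: "V t \<in> borel_measurable (F t)" using Vp_meas[OF V tT] .
  have A: "A \<in> sets (F t)"
  proof -
    have "{\<omega>\<in>space (F t). V t \<omega> \<le> 0} \<in> sets (F t)" by measurable
    thus ?thesis using spF[OF tT] by (simp add: A_def)
  qed
  have A': "A \<in> sets (F (Suc t))" using sF_mono[OF _ tT' A] by simp
  define W where "W = dot_t (indicator A) t V"
  define V' where "V' = dot_t (indicator A) (Suc t) V"
  have W: "W \<in> Vp M F T p" unfolding W_def by (rule dot_Vp[OF tT A V])
  have V': "V' \<in> Vp M F T p" unfolding V'_def by (rule dot_Vp[OF tT' A' V])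
  have H1: "AE \<omega> in M. \<omega> \<in> A \<longrightarrow> \<phi> (Suc t) V \<omega> = \<phi> (Suc t) V' \<omega>"
    unfolding V'_def by (rule loc[OF tT' A' V])
  have H2: "AE \<omega> in M. \<phi> (Suc t) W \<omega> \<le> \<phi> (Suc t) V' \<omega>"
  proof (rule mono[OF tT' W V'])
    fix s \<omega> assume "s \<le> T" "\<omega> \<in> space M"
    thus "W s \<omega> \<le> V' s \<omega>"
      unfolding V'_def W_def dot_t_def A_def
      by (cases "s < t"; cases "s = t") (auto simp: indicator_def)
  qed
  have H3: "AE \<omega> in M. \<phi> (Suc t) V \<omega> \<le> Esssup M (F t) (\<phi> (Suc t) V) \<omega>"
    by (rule Esssup_ge[OF P subF[OF tT]])
  define m where "m \<omega> = (if \<omega> \<in> A then Esssup M (F t) (\<phi> (Suc t) V) \<omega> else \<infinity>)" for \<omega>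
  have mm: "m \<in> borel_measurable (F t)"
    unfolding m_def
    by (rule measurable_If_set) (use A Esssup_meas[OF P subF[OF tT]] in auto)
  have Wpos: "AE \<omega> in M. W t \<omega> \<le> 0"
    by (rule AE_I2) (auto simp: W_def dot_t_def A_def indicator_def)
  have "AE \<omega> in M. \<phi> (Suc t) W \<omega> \<le> m \<omega>"
    using H1 H2 H3 by eventually_elim (auto simp: m_def)
  hence H5: "AE \<omega> in M. \<phi> t W \<omega> \<le> m \<omega>" using H W t mm Wpos by blast
  have H4: "AE \<omega> in M. \<omega> \<in> A \<longrightarrow> \<phi> t V \<omega> = \<phi> t W \<omega>"
    unfolding W_def by (rule loc[OF tT A V])
  show "AE \<omega> in M. \<phi> t V \<omega> \<le> (if V t \<omega> \<le> 0 then Esssup M (F t) (\<phi> (Suc t) V) \<omega> else \<infinity>)"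
    using H4 H5 AE_space
  proof (eventually_elim)
    case (elim \<omega>)
    show ?case
    proof (cases "V t \<omega> \<le> 0")
      case True
      hence "\<omega> \<in> A" using elim by (simp add: A_def)
      thus ?thesis using elim True by (simp add: m_def)
    qed simp
  qed
qed

end

theorem proposition4p8:
  fixes M :: "'a measure" and F :: "nat \<Rightarrow> 'a measure" and T :: nat and p :: ennreal
    and \<phi> :: "nat \<Rightarrow> (nat \<Rightarrow> 'a \<Rightarrow> real) \<Rightarrow> 'a \<Rightarrow> ereal"
  assumes "prob_space M"
    and "filtration M F T"
    and "p \<in> {0, 1, \<infinity>}"
    and "dyn_LM M F T p \<phi>"
  shows
   "((\<forall>V\<in>Vp M F T p. \<forall>t<T. \<forall>m \<in> borel_measurable (F (Suc t)).
        (AE \<omega> in M. \<phi> (Suc t) V \<omega> \<ge> m \<omega>) \<longrightarrow>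
        (AE \<omega> in M. \<phi> t V \<omega> \<ge> (if V t \<omega> \<ge> 0 then Essinf M (F t) m \<omega> else -\<infinity>)))
     \<longleftrightarrow>
     (\<forall>V\<in>Vp M F T p. \<forall>t<T.
        AE \<omega> in M. \<phi> t V \<omega> \<ge> (if V t \<omega> \<ge> 0 then Essinf M (F t) (\<phi> (Suc t) V) \<omega> else -\<infinity>)))
    \<and>
    ((\<forall>V\<in>Vp M F T p. \<forall>t<T.
        AE \<omega> in M. \<phi> t V \<omega> \<ge> (if V t \<omega> \<ge> 0 then Essinf M (F t) (\<phi> (Suc t) V) \<omega> else -\<infinity>))
     \<longleftrightarrow>
     (\<forall>V\<in>Vp M F T p. \<forall>t<T. \<forall>m \<in> borel_measurable (F t).
        (AE \<omega> in M. V t \<omega> \<ge> 0) \<longrightarrow> (AE \<omega> in M. \<phi> (Suc t) V \<omega> \<ge> m \<omega>) \<longrightarrow>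
        (AE \<omega> in M. \<phi> t V \<omega> \<ge> m \<omega>)))
    \<and>
    ((\<forall>V\<in>Vp M F T p. \<forall>t<T. \<forall>m \<in> borel_measurable (F (Suc t)).
        (AE \<omega> in M. \<phi> (Suc t) V \<omega> \<le> m \<omega>) \<longrightarrow>
        (AE \<omega> in M. \<phi> t V \<omega> \<le> (if V t \<omega> \<le> 0 then Esssup M (F t) m \<omega> else \<infinity>)))
     \<longleftrightarrow>
     (\<forall>V\<in>Vp M F T p. \<forall>t<T.
        AE \<omega> in M. \<phi> t V \<omega> \<le> (if V t \<omega> \<le> 0 then Esssup M (F t) (\<phi> (Suc t) V) \<omega> else \<infinity>)))
    \<and>
    ((\<forall>V\<in>Vp M F T p. \<forall>t<T.
        AE \<omega> in M. \<phi> t V \<omega> \<le> (if V t \<omega> \<le> 0 then Esssup M (F t) (\<phi> (Suc t) V) \<omega> else \<infinity>))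
     \<longleftrightarrow>
     (\<forall>V\<in>Vp M F T p. \<forall>t<T. \<forall>m \<in> borel_measurable (F t).
        (AE \<omega> in M. V t \<omega> \<le> 0) \<longrightarrow> (AE \<omega> in M. \<phi> (Suc t) V \<omega> \<le> m \<omega>) \<longrightarrow>
        (AE \<omega> in M. \<phi> t V \<omega> \<le> m \<omega>)))"
  using acc12[OF assms(1,2,4)] acc23[OF assms(1,2,4)] rej12[OF assms(1,2,4)] rej23[OF assms(1,2,4)]
  by blast

end
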